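(* Let $\lambda_1\ge\lambda_2\ge\cdots\ge\lambda_p>0$ and define the norm $\Omega(\beta):=\sum_{i=1}^p\lambda_i|\beta|_{(i)}$ on $\mathbb{R}^p$, where $|\beta|_{(1)}\ge\cdots\ge|\beta|_{(p)}$ are the absolute values of the entries of $\beta$ in decreasing order. Let $S\subseteq\{1,\dots,p\}$, $s=|S|$, $r=p-s$, and define on $\mathbb{R}^{r}$ (indexed by $S^c$) $$\Omega^{S^c}(\beta_{S^c}):=\sum_{l=1}^r\lambda_{p-r+l}|\beta|_{(l,S^c)},$$ where $|\beta|_{(1,S^c)}\ge\cdots\ge|\beta|_{(r,S^c)}$ are the absolute values of the entries of $\beta_{S^c}$ in decreasing order. Then $\Omega(\beta)\ge\Omega(\beta_S)+\Omega^{S^c}(\beta_{S^c})$ for all $\beta\in\mathbb{R}^p$. Moreover, $\Omega^{S^c}$ is the strongest such norm: for every norm $\underline\Omega^{S^c}$ on $\mathbb{R}^{r}$ satisfying $\Omega(\beta)\ge\Omega(\beta_S)+\underline\Omega^{S^c}(\beta_{S^c})$ for all $\beta\in\mathbb{R}^p$, one has $\underline\Omega^{S^c}(v)\le\Omega^{S^c}(v)$ for all $v\in\mathbb{R}^r$.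
   Context: $\beta_S$ denotes the vector in $\mathbb{R}^p$ agreeing with $\beta$ on $S$ and equal to $0$ off $S$ (when $\Omega$ is applied), and $\beta_{S^c}=(\beta_j)_{j\in S^c}\in\mathbb{R}^{r}$. *)

theory Defs
  imports Complex_Main
begin

text \<open>Vectors of R^p are modelled as functions nat => real, coordinates 0..p-1.
  A vector indexed by a finite index set I (e.g. S^c) is a function vanishing off I.\<close>

definition dec_abs :: "(nat \<Rightarrow> real) \<Rightarrow> nat set \<Rightarrow> real list" where
  "dec_abs b I = rev (sort (map (\<lambda>i. \<bar>b i\<bar>) (sorted_list_of_set I)))"

text \<open>Sorted-L1 norm: Omega(b) = sum_{i<p} lam i * |b|_(i+1)  (0-based lam).\<close>
definition slope :: "nat \<Rightarrow> (nat \<Rightarrow> real) \<Rightarrow> (nat \<Rightarrow> real) \<Rightarrow> real" where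
  "slope p lam b = (\<Sum>i<p. lam i * dec_abs b {..<p} ! i)"

definition slope_comp :: "nat \<Rightarrow> (nat \<Rightarrow> real) \<Rightarrow> nat set \<Rightarrow> (nat \<Rightarrow> real) \<Rightarrow> real" where
  "slope_comp p lam S b =
     (let Sc = {..<p} - S; r = card Sc in (\<Sum>l<r. lam (p - r + l) * dec_abs b Sc ! l))"

definition restr :: "(nat \<Rightarrow> real) \<Rightarrow> nat set \<Rightarrow> nat \<Rightarrow> real" where
  "restr b I = (\<lambda>i. if i \<in> I then b i else 0)"

definition is_norm_on :: "nat set \<Rightarrow> ((nat \<Rightarrow> real) \<Rightarrow> real) \<Rightarrow> bool" where
  "is_norm_on I N \<longleftrightarrow>
     (\<forall>v. (\<forall>i. i \<notin> I \<longrightarrow> v i = 0) \<longrightarrow> N v \<ge> 0 \<and> (N v = 0 \<longleftrightarrow> v = (\<lambda>_. 0))) \<and>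
     (\<forall>v c. (\<forall>i. i \<notin> I \<longrightarrow> v i = 0) \<longrightarrow> N (\<lambda>i. c * v i) = \<bar>c\<bar> * N v) \<and>
     (\<forall>v w. (\<forall>i. i \<notin> I \<longrightarrow> v i = 0) \<longrightarrow> (\<forall>i. i \<notin> I \<longrightarrow> w i = 0) \<longrightarrow>
        N (\<lambda>i. v i + w i) \<le> N v + N w)"

end

theory Submission
  imports Defs "HOL-Library.Multiset"
begin

fun wsum :: "(nat \<Rightarrow> real) \<Rightarrow> real list \<Rightarrow> real" where
  "wsum lam [] = 0"
| "wsum lam (x # xs) = lam 0 * x + wsum (\<lambda>i. lam (Suc i)) xs"

lemma wsum_sum: "wsum lam xs = (\<Sum>i<length xs. lam i * xs ! i)"
  by (induction xs arbitrary: lam) (simp_all del: sum.lessThan_Suc add: sum.lessThan_Suc_shift)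

lemma wsum_append: "wsum lam (xs @ ys) = wsum lam xs + wsum (\<lambda>i. lam (length xs + i)) ys"
  by (induction xs arbitrary: lam) simp_all

lemma wsum_zero: "wsum lam (replicate n 0) = 0"
  by (induction n arbitrary: lam) simp_all

definition dec :: "(nat \<Rightarrow> real) \<Rightarrow> nat \<Rightarrow> bool" where
  "dec lam n \<longleftrightarrow> (\<forall>i j. i \<le> j \<longrightarrow> j < n \<longrightarrow> lam j \<le> lam i)"

lemma dec_shift: "dec lam (Suc n) \<Longrightarrow> dec (\<lambda>i. lam (Suc i)) n"
  unfolding dec_def by auto

lemma move:
  assumes "dec lam (Suc (length as))" "\<forall>a\<in>set as. a \<le> z"
  shows "wsum lam (as @ [z]) \<le> wsum lam (z # as)"
  using assms
proof (induction as arbitrary: lam)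
  case Nil then show ?case by simp
next
  case (Cons a as)
  have d: "dec (\<lambda>i. lam (Suc i)) (Suc (length as))" using Cons.prems(1) dec_shift by simp
  have IH: "wsum (\<lambda>i. lam (Suc i)) (as @ [z]) \<le> wsum (\<lambda>i. lam (Suc i)) (z # as)"
    using Cons.IH[OF d] Cons.prems(2) by simp
  have "lam 1 \<le> lam 0" using Cons.prems(1) unfolding dec_def by auto
  moreover have "a \<le> z" using Cons.prems(2) by simp
  ultimately have "lam 0 * a + lam 1 * z \<le> lam 0 * z + lam 1 * a"
    by (smt (verit) mult_right_mono right_diff_distrib left_diff_distrib)
  then show ?case using IH by simp
qed

lemma rearr:
  assumes "sorted_wrt (\<ge>) zs" "mset ys = mset zs" "dec lam (length zs)"
  shows "wsum lam ys \<le> wsum lam zs"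
  using assms
proof (induction zs arbitrary: ys lam)
  case Nil then show ?case by simp
next
  case (Cons z zs)
  have "z \<in> set ys" using Cons.prems(2) by (metis list.set_intros(1) set_mset_mset)
  then obtain as bs where ys: "ys = as @ z # bs" by (meson split_list)
  have m: "mset (as @ bs) = mset zs" using Cons.prems(2) ys by simp
  have "set as \<subseteq> set (z # zs)" using Cons.prems(2) ys
    by (metis Un_iff set_append set_mset_mset subsetI)
  then have le: "\<forall>a\<in>set as. a \<le> z" using Cons.prems(1) by auto
  have la: "length as \<le> length zs" using m by (metis length_append le_add1 size_mset)
  have d1: "dec lam (Suc (length as))" using Cons.prems(3) la unfolding dec_def by auto
  have "wsum lam ys = wsum lam (as @ [z]) + wsum (\<lambda>i. lam (Suc (length as) + i)) bs"
    using ys wsum_append[of lam "as @ [z]" bs] by simp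
  also have "\<dots> \<le> wsum lam (z # as) + wsum (\<lambda>i. lam (Suc (length as) + i)) bs"
    using move[OF d1 le] by simp
  also have "\<dots> = lam 0 * z + wsum (\<lambda>i. lam (Suc i)) (as @ bs)"
    using wsum_append[of "\<lambda>i. lam (Suc i)" as bs] by simp
  also have "\<dots> \<le> lam 0 * z + wsum (\<lambda>i. lam (Suc i)) zs"
    using Cons.IH[of "as @ bs" "\<lambda>i. lam (Suc i)"] Cons.prems(1) m dec_shift[of lam "length zs"]
      Cons.prems(3) by simp
  finally show ?case by simp
qed

lemma revsort:
  assumes "mset xs = mset T + mset C" "sorted_wrt (\<ge>) T" "sorted_wrt (\<ge>) C"
    "\<forall>x\<in>set T. \<forall>y\<in>set C. y \<le> x"
  shows "rev (sort xs) = T @ C"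
proof -
  have "sort xs = rev C @ rev T"
  proof (rule properties_for_sort)
    show "mset (rev C @ rev T) = mset xs" using assms(1) by simp
    show "sorted (rev C @ rev T)" using assms(2-4)
      by (auto simp: sorted_append sorted_wrt_rev)
  qed
  then show ?thesis by simp
qed

lemma swr[simp]: "sorted_wrt (\<lambda>x y. y \<le> x) (replicate n (a::real))"
  by (induction n) auto

lemma mset_sls: "mset (sorted_list_of_set A) = mset_set A"
  by (metis mset_sorted_list_of_multiset sorted_list_of_mset_set)

lemma mset_dec_abs: "finite I \<Longrightarrow> mset (dec_abs b I) = image_mset (\<lambda>i. \<bar>b i\<bar>) (mset_set I)"
  unfolding dec_abs_def by (simp add: mset_sls)

lemma set_dec_abs: "finite I \<Longrightarrow> set (dec_abs b I) = (\<lambda>i. \<bar>b i\<bar>) ` I"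
  unfolding dec_abs_def by simp

lemma sorted_dec_abs: "sorted_wrt (\<ge>) (dec_abs b I)"
  unfolding dec_abs_def by (simp add: sorted_wrt_rev)

lemma length_dec_abs: "finite I \<Longrightarrow> length (dec_abs b I) = card I"
  unfolding dec_abs_def by simp

lemma dec_abs_cong: "(\<And>i. i \<in> I \<Longrightarrow> b i = c i) \<Longrightarrow> dec_abs b I = dec_abs c I"
  unfolding dec_abs_def
proof -
  assume "\<And>i. i \<in> I \<Longrightarrow> b i = c i"
  then have "map (\<lambda>i. \<bar>b i\<bar>) (sorted_list_of_set I) = map (\<lambda>i. \<bar>c i\<bar>) (sorted_list_of_set I)"
  proof (cases "finite I")
    case True
    then show ?thesis using \<open>\<And>i. i \<in> I \<Longrightarrow> b i = c i\<close>
      by (intro map_cong) auto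
  qed simp
  then show "rev (sort (map (\<lambda>i. \<bar>b i\<bar>) (sorted_list_of_set I))) = rev (sort (map (\<lambda>i. \<bar>c i\<bar>) (sorted_list_of_set I)))" by (simp only:)
qed

lemma mset_split:
  assumes "S \<subseteq> {..<p}"
  shows "mset (dec_abs b {..<p}) = image_mset (\<lambda>i. \<bar>b i\<bar>) (mset_set S)
       + image_mset (\<lambda>i. \<bar>b i\<bar>) (mset_set ({..<p} - S))"
proof -
  have "{..<p} = S \<union> ({..<p} - S)" using assms by auto
  then have "mset_set {..<p} = mset_set S + mset_set ({..<p} - S)"
    using assms by (metis Diff_disjoint finite_Diff finite_lessThan finite_subset mset_set_Union)
  then show ?thesis by (simp add: mset_dec_abs)
qed

lemma slope_wsum: "slope p lam b = wsum lam (dec_abs b {..<p})"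
  unfolding slope_def wsum_sum by (simp add: length_dec_abs)

lemma slope_comp_wsum: "slope_comp p lam S b =
   wsum (\<lambda>l. lam (p - card ({..<p} - S) + l)) (dec_abs b ({..<p} - S))"
  unfolding slope_comp_def wsum_sum Let_def by (simp add: length_dec_abs)

lemma const_image: "(\<And>i. i \<in> S \<Longrightarrow> f i = c) \<Longrightarrow> finite S \<Longrightarrow>
   image_mset f (mset_set S) = mset (replicate (card S) c)"
proof -
  assume a: "\<And>i. i \<in> S \<Longrightarrow> f i = c" "finite S"
  have "image_mset f (mset_set S) = image_mset (\<lambda>_. c) (mset_set S)"
    by (rule image_mset_cong) (use a in auto)
  then show ?thesis using a(2) by (simp add: image_mset_const_eq)
qed

theorem lemma6:
  fixes p :: nat and lam :: "nat \<Rightarrow> real" and S :: "nat set"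
  assumes mono: "\<And>i j. i \<le> j \<Longrightarrow> j < p \<Longrightarrow> lam j \<le> lam i"
    and pos: "\<And>i. i < p \<Longrightarrow> lam i > 0"
    and S: "S \<subseteq> {..<p}"
  shows "(\<forall>b. slope p lam b \<ge> slope p lam (restr b S) + slope_comp p lam S (restr b ({..<p} - S)))
    \<and> (\<forall>N. is_norm_on ({..<p} - S) N \<and>
            (\<forall>b. slope p lam b \<ge> slope p lam (restr b S) + N (restr b ({..<p} - S)))
          \<longrightarrow> (\<forall>v. (\<forall>i. i \<notin> {..<p} - S \<longrightarrow> v i = 0) \<longrightarrow> N v \<le> slope_comp p lam S v))"
proof -
  define Sc where "Sc = {..<p} - S"
  define s where "s = card S"
  define r where "r = card Sc"
  have fS: "finite S" using S finite_subset by blast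
  have fSc: "finite Sc" unfolding Sc_def by simp
  have sr: "s + r = p" unfolding s_def r_def Sc_def using S fS
    using card_mono[OF _ S] by (simp add: card_Diff_subset)
  have prs: "p - r = s" using sr by simp
  have dl: "dec lam p" using mono unfolding dec_def by auto
  have part1: "slope p lam b \<ge> slope p lam (restr b S) + slope_comp p lam S (restr b Sc)" for b
  proof -
    define T where "T = dec_abs b S"
    define C where "C = dec_abs b Sc"
    have C': "dec_abs (restr b Sc) Sc = C" unfolding C_def
      by (rule dec_abs_cong) (simp add: restr_def)
    have lT: "length T = s" unfolding T_def s_def using fS by (simp add: length_dec_abs)
    have B: "dec_abs (restr b S) {..<p} = T @ replicate r 0"
    proof -
      have "mset (map (\<lambda>i. \<bar>restr b S i\<bar>) (sorted_list_of_set {..<p})) = mset T + mset (replicate r 0)"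
      proof -
        have "mset (dec_abs (restr b S) {..<p}) = mset T + mset (replicate r 0)"
          unfolding mset_split[OF S] T_def
          using const_image[of Sc "\<lambda>i. \<bar>restr b S i\<bar>" 0] fSc fS
          by (simp add: mset_dec_abs r_def Sc_def restr_def)
            (rule image_mset_cong, use fS in auto)
        then show ?thesis unfolding dec_abs_def by simp
      qed
      then show ?thesis unfolding dec_abs_def[of "restr b S" "{..<p}"]
        apply (rule revsort)
        using sorted_dec_abs[of b S] fS by (auto simp: T_def set_dec_abs sorted_wrt_append)
    qed
    have m: "mset (T @ C) = mset (dec_abs b {..<p})"
      unfolding mset_split[OF S] T_def C_def Sc_def using fS by (simp add: mset_dec_abs)
    have "wsum lam (T @ C) \<le> slope p lam b"
      unfolding slope_wsum
      by (rule rearr[OF sorted_dec_abs m]) (simp add: length_dec_abs dl)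
    moreover have "wsum lam (T @ C) = slope p lam (restr b S) + slope_comp p lam S (restr b Sc)"
      unfolding slope_wsum slope_comp_wsum B wsum_append wsum_zero
      using C' prs lT by (simp add: Sc_def[symmetric] r_def[symmetric])
    ultimately show ?thesis by simp
  qed
  have part2: "N v \<le> slope_comp p lam S v"
    if H: "\<forall>b. slope p lam b \<ge> slope p lam (restr b S) + N (restr b Sc)"
      and v: "\<forall>i. i \<notin> Sc \<longrightarrow> v i = 0" for N v
  proof -
    define M where "M = (\<Sum>i<p. \<bar>v i\<bar>)"
    have M0: "M \<ge> 0" unfolding M_def by (simp add: sum_nonneg)
    have vM: "\<bar>v i\<bar> \<le> M" if "i \<in> Sc" for i
      unfolding M_def using that Sc_def
      by (intro member_le_sum) auto
    define b where "b = (\<lambda>i. if i \<in> S then M else v i)"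
    define C where "C = dec_abs v Sc"
    have rb: "restr b Sc = v" unfolding restr_def b_def using v Sc_def by auto
    have cS: "image_mset (\<lambda>i. \<bar>b i\<bar>) (mset_set S) = mset (replicate s M)"
      using const_image[of S "\<lambda>i. \<bar>b i\<bar>" M] fS M0 by (simp add: b_def s_def)
    have A: "dec_abs b {..<p} = replicate s M @ C"
    proof -
      have "mset (dec_abs b {..<p}) = mset (replicate s M) + mset C"
        unfolding mset_split[OF S] cS C_def Sc_def[symmetric] using fSc
        by (simp add: mset_dec_abs b_def Sc_def) (rule image_mset_cong, auto)
      then show ?thesis unfolding dec_abs_def[of b "{..<p}"]
        apply -
        apply (rule revsort)
        using sorted_dec_abs[of v Sc] fSc vM
        by (auto simp: C_def set_dec_abs sorted_wrt_append dec_abs_def)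
    qed
    have B: "dec_abs (restr b S) {..<p} = replicate s M @ replicate r 0"
    proof -
      have cS': "image_mset (\<lambda>i. \<bar>restr b S i\<bar>) (mset_set S) = mset (replicate s M)"
        using const_image[of S "\<lambda>i. \<bar>restr b S i\<bar>" M] fS M0 by (simp add: b_def s_def restr_def)
      have cSc: "image_mset (\<lambda>i. \<bar>restr b S i\<bar>) (mset_set Sc) = mset (replicate r 0)"
        using const_image[of Sc "\<lambda>i. \<bar>restr b S i\<bar>" 0] fSc by (simp add: Sc_def r_def restr_def)
      have "mset (dec_abs (restr b S) {..<p}) = mset (replicate s M) + mset (replicate r 0)"
        unfolding mset_split[OF S] cS' Sc_def[symmetric] cSc ..
      then show ?thesis unfolding dec_abs_def[of "restr b S" "{..<p}"]
        apply -
        apply (rule revsort)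
        using M0 by (auto simp: dec_abs_def sorted_wrt_append)
    qed
    have "slope p lam b = wsum lam (replicate s M) + slope_comp p lam S v"
      unfolding slope_wsum slope_comp_wsum A wsum_append
      using prs by (simp add: Sc_def[symmetric] r_def[symmetric] C_def)
    moreover have "slope p lam (restr b S) = wsum lam (replicate s M)"
      unfolding slope_wsum B wsum_append wsum_zero by simp
    moreover have "slope p lam (restr b S) + N (restr b Sc) \<le> slope p lam b" using H by blast
    ultimately show ?thesis using rb by simp
  qed
  show ?thesis using part1 part2 unfolding Sc_def by blast
qed

end
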